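(* Let $\mathcal{A}$ be a finite set of responses with $|\mathcal{A}|\ge 2$. For each $i\in\mathcal{A}$ let $p_i>0$ with $\sum_{i\in\mathcal{A}}p_i=1$, and let $r^*_i\in\mathbb{R}$. Define $$\alpha_i=\sum_{j\neq i}\frac{p_i}{p_i+p_j},\qquad \beta_i=\sum_{j\neq i}\frac{e^{r^*_i}}{e^{r^*_i}+e^{r^*_j}},\qquad w_i=-(\alpha_i-\beta_i).$$ Suppose $\beta_i$ monotonically increases with $p_i$ (i.e. $\beta_i=h(p_i)$ for all $i\in\mathcal{A}$, for some monotonically increasing function $h$). Then, with all expectations, variances and covariances taken over $i$ drawn uniformly at random from $\mathcal{A}$, $$\operatorname{Var}[w_ip_i]-\operatorname{Var}[w_i]\,\mathbb{E}[p_i^2]\;\geq\;2\Big(\operatorname{Cov}[\alpha_i,\beta_i]\,\mathbb{E}[p_i^2]-\operatorname{Cov}[\alpha_ip_i,\beta_ip_i]\Big).$$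
   Context: Interpretation: for a fixed prompt $x$, $p_i=\pi_\theta(y_i\mid x)$ is the model probability of response $y_i$, and $r^*_i$ is the value of the optimal reward on $(x,y_i)$. The random index $i$ is uniform over the response set $\mathcal{A}$, so e.g. $\mathbb{E}[p_i^2]=\frac{1}{|\mathcal{A}|}\sum_{i\in\mathcal{A}}p_i^2$. *)

theory Defs
  imports Complex_Main
begin

definition uexp :: "'a set \<Rightarrow> ('a \<Rightarrow> real) \<Rightarrow> real" where
  "uexp A f = (\<Sum>i\<in>A. f i) / real (card A)"

definition ucov :: "'a set \<Rightarrow> ('a \<Rightarrow> real) \<Rightarrow> ('a \<Rightarrow> real) \<Rightarrow> real" where
  "ucov A f g = uexp A (\<lambda>i. (f i - uexp A f) * (g i - uexp A g))"

definition uvar :: "'a set \<Rightarrow> ('a \<Rightarrow> real) \<Rightarrow> real" where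
  "uvar A f = uexp A (\<lambda>i. (f i - uexp A f)^2)"

definition alpha :: "'a set \<Rightarrow> ('a \<Rightarrow> real) \<Rightarrow> 'a \<Rightarrow> real" where
  "alpha A p i = (\<Sum>j\<in>A - {i}. p i / (p i + p j))"

definition beta :: "'a set \<Rightarrow> ('a \<Rightarrow> real) \<Rightarrow> 'a \<Rightarrow> real" where
  "beta A r i = (\<Sum>j\<in>A - {i}. exp (r i) / (exp (r i) + exp (r j)))"

definition wgt :: "'a set \<Rightarrow> ('a \<Rightarrow> real) \<Rightarrow> ('a \<Rightarrow> real) \<Rightarrow> 'a \<Rightarrow> real" where
  "wgt A p r i = - (alpha A p i - beta A r i)"

end

theory Submission
  imports Defs
begin

lemma uexp_diff: "uexp A (\<lambda>i. f i - g i) = uexp A f - uexp A g"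
  by (simp add: uexp_def sum_subtractf diff_divide_distrib)

lemma uexp_add: "uexp A (\<lambda>i. f i + g i) = uexp A f + uexp A g"
  by (simp add: uexp_def sum.distrib add_divide_distrib)

lemma uexp_cmult: "uexp A (\<lambda>i. c * f i) = c * uexp A f"
  by (simp add: uexp_def sum_distrib_left[symmetric])

lemma uexp_const: "finite A \<Longrightarrow> A \<noteq> {} \<Longrightarrow> uexp A (\<lambda>i. c) = c"
  by (simp add: uexp_def)

lemma uvar_alt:
  assumes "finite A" "A \<noteq> {}"
  shows "uvar A f = uexp A (\<lambda>i. (f i)^2) - (uexp A f)^2"
proof -
  have "(\<lambda>i. (f i - uexp A f)^2) = (\<lambda>i. ((f i)^2 - 2 * uexp A f * f i) + (uexp A f)^2)"
    by (rule ext) (simp add: power2_eq_square algebra_simps)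
  then show ?thesis using assms
    by (simp add: uvar_def uexp_add uexp_diff uexp_cmult uexp_const power2_eq_square)
qed

lemma ucov_alt:
  assumes "finite A" "A \<noteq> {}"
  shows "ucov A f g = uexp A (\<lambda>i. f i * g i) - uexp A f * uexp A g"
proof -
  have "(\<lambda>i. (f i - uexp A f) * (g i - uexp A g)) =
        (\<lambda>i. ((f i * g i - uexp A g * f i) - uexp A f * g i) + uexp A f * uexp A g)"
    by (rule ext) (simp add: algebra_simps)
  then show ?thesis using assms
    by (simp add: ucov_def uexp_add uexp_diff uexp_cmult uexp_const)
qed

lemma double_sum_gen:
  assumes "finite A"
  shows "(\<Sum>j\<in>A. \<Sum>k\<in>A. (G j * q j + G k * q k) - (G j * q k + G k * q j)) =
         2 * real (card A) * (\<Sum>j\<in>A. G j * q j) - 2 * ((\<Sum>j\<in>A. G j) * (\<Sum>j\<in>A. q j))"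
proof -
  have "(\<Sum>j\<in>A. \<Sum>k\<in>A. (G j * q j + G k * q k) - (G j * q k + G k * q j)) =
        (\<Sum>j\<in>A. real (card A) * (G j * q j) + (\<Sum>k\<in>A. G k * q k)
              - (G j * (\<Sum>k\<in>A. q k) + (\<Sum>k\<in>A. G k) * q j))"
    by (simp add: sum_subtractf sum.distrib sum_distrib_left sum_distrib_right)
  also have "\<dots> = real (card A) * (\<Sum>j\<in>A. G j * q j) + real (card A) * (\<Sum>k\<in>A. G k * q k)
       - ((\<Sum>j\<in>A. G j) * (\<Sum>k\<in>A. q k) + (\<Sum>k\<in>A. G k) * (\<Sum>j\<in>A. q j))"
    unfolding sum_subtractf sum.distrib sum_distrib_left[symmetric] sum_distrib_right[symmetric] by simp
  finally show ?thesis by simp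
qed

lemma double_sum_sq:
  assumes "finite A"
  shows "(\<Sum>i\<in>A. \<Sum>j\<in>A. (g i - g j)^2) =
         2 * real (card A) * (\<Sum>i\<in>A. (g i)^2) - 2 * (\<Sum>i\<in>A. g i)^2"
proof -
  have "(\<Sum>i\<in>A. \<Sum>j\<in>A. (g i - g j)^2) =
        (\<Sum>i\<in>A. \<Sum>j\<in>A. (g i * g i + g j * g j) - (g i * g j + g j * g i))"
    by (simp add: power2_eq_square algebra_simps)
  also have "\<dots> = 2 * real (card A) * (\<Sum>i\<in>A. (g i)^2) - 2 * (\<Sum>i\<in>A. g i)^2"
    using double_sum_gen[OF assms, of g g] by (simp add: power2_eq_square)
  finally show ?thesis .
qed

lemma uvar_double:
  assumes "finite A" "A \<noteq> {}"
  shows "uvar A g = (\<Sum>i\<in>A. \<Sum>j\<in>A. (g i - g j)^2) / (2 * (real (card A))^2)"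
  unfolding uvar_alt[OF assms] double_sum_sq[OF assms(1)] uexp_def
  using assms by (simp add: field_simps power2_eq_square)

lemma chebyshev:
  assumes "finite A"
    and "\<forall>j\<in>A. \<forall>k\<in>A. (G j - G k) * (q j - q k) \<ge> 0"
  shows "(\<Sum>j\<in>A. G j) * (\<Sum>j\<in>A. q j) \<le> real (card A) * (\<Sum>j\<in>A. G j * q j)"
proof -
  have "0 \<le> (\<Sum>j\<in>A. \<Sum>k\<in>A. (G j - G k) * (q j - q k))"
    using assms by (intro sum_nonneg) auto
  also have "\<dots> = (\<Sum>j\<in>A. \<Sum>k\<in>A. (G j * q j + G k * q k) - (G j * q k + G k * q j))"
    by (simp add: algebra_simps)
  also have "\<dots> = 2 * real (card A) * (\<Sum>j\<in>A. G j * q j) - 2 * ((\<Sum>j\<in>A. G j) * (\<Sum>j\<in>A. q j))"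
    by (rule double_sum_gen[OF assms(1)])
  finally show ?thesis by simp
qed

lemma D_nonneg:
  assumes fin: "finite A" and ne: "A \<noteq> {}"
    and f0: "\<forall>i\<in>A. 0 \<le> f i" and p0: "\<forall>i\<in>A. 0 \<le> p i"
    and mo: "\<forall>i\<in>A. \<forall>j\<in>A. p i \<le> p j \<longrightarrow> f i \<le> f j"
  shows "uvar A f * uexp A (\<lambda>i. (p i)^2) \<le> uvar A (\<lambda>i. f i * p i)"
proof -
  define d where "d i j = (f i - f j)^2" for i j
  define c :: "'a \<Rightarrow> 'a \<Rightarrow> real" where
    "c i j = (if p i \<le> p j then 1 else 0) + (if p i < p j then 1 else 0)" for i j
  define G where "G j = (\<Sum>i\<in>A. d i j * c i j)" for j
  define M where "M i j = (if p i \<le> p j then (p j)^2 else (p i)^2)" for i j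
  have dsym: "d i j = d j i" for i j by (simp add: d_def power2_commute)
  have d0: "0 \<le> d i j" for i j by (simp add: d_def)
  have c0: "0 \<le> c i j" for i j by (simp add: c_def)
  have csym: "c i j + c j i = 2" for i j by (auto simp: c_def)
  have step1: "d i j * M i j \<le> (f i * p i - f j * p j)^2" if "i \<in> A" "j \<in> A" for i j
  proof (cases "p i \<le> p j")
    case True
    then have "f i \<le> f j" using mo that by blast
    have "(f j - f i) * p j \<le> f j * p j - f i * p i"
      using f0 p0 that True by (simp add: algebra_simps mult_left_mono)
    moreover have "0 \<le> (f j - f i) * p j" using \<open>f i \<le> f j\<close> p0 that by simp
    ultimately have "((f j - f i) * p j)^2 \<le> (f j * p j - f i * p i)^2"
      by (simp add: power_mono)
    then show ?thesis using True
      by (simp add: d_def M_def power_mult_distrib power2_commute)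
  next
    case False
    then have "f j \<le> f i" using mo that by auto
    have "(f i - f j) * p i \<le> f i * p i - f j * p j"
      using f0 p0 that False by (simp add: algebra_simps mult_left_mono)
    moreover have "0 \<le> (f i - f j) * p i" using \<open>f j \<le> f i\<close> p0 that by simp
    ultimately have "((f i - f j) * p i)^2 \<le> (f i * p i - f j * p j)^2"
      by (simp add: power_mono)
    then show ?thesis using False
      by (simp add: d_def M_def power_mult_distrib)
  qed
  have step2: "(\<Sum>i\<in>A. \<Sum>j\<in>A. d i j * M i j) = (\<Sum>j\<in>A. G j * (p j)^2)"
  proof -
    have e1: "(\<Sum>i\<in>A. \<Sum>j\<in>A. d i j * M i j) =
      (\<Sum>i\<in>A. \<Sum>j\<in>A. d i j * (if p i \<le> p j then 1 else 0) * (p j)^2)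
      + (\<Sum>i\<in>A. \<Sum>j\<in>A. d i j * (if p i \<le> p j then 0 else 1) * (p i)^2)"
      by (auto simp: M_def sum.distrib[symmetric] intro!: sum.cong)
    have e2: "(\<Sum>i\<in>A. \<Sum>j\<in>A. d i j * (if p i \<le> p j then 0 else 1) * (p i)^2)
       = (\<Sum>i\<in>A. \<Sum>j\<in>A. d i j * (if p i < p j then 1 else 0) * (p j)^2)"
      by (subst sum.swap) (auto simp: dsym intro!: sum.cong)
    have e3: "(\<Sum>i\<in>A. \<Sum>j\<in>A. d i j * (if p i \<le> p j then 1 else 0) * (p j)^2)
      + (\<Sum>i\<in>A. \<Sum>j\<in>A. d i j * (if p i < p j then 1 else 0) * (p j)^2)
      = (\<Sum>i\<in>A. \<Sum>j\<in>A. d i j * c i j * (p j)^2)"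
      by (simp add: c_def sum.distrib[symmetric] algebra_simps)
    have e4: "(\<Sum>i\<in>A. \<Sum>j\<in>A. d i j * c i j * (p j)^2) = (\<Sum>j\<in>A. \<Sum>i\<in>A. d i j * c i j * (p j)^2)"
      by (rule sum.swap)
    have e5: "\<dots> = (\<Sum>j\<in>A. G j * (p j)^2)"
      by (simp add: G_def sum_distrib_right)
    show ?thesis using e1 e2 e3 e4 e5 by simp
  qed
  have step3: "(\<Sum>j\<in>A. G j) = (\<Sum>i\<in>A. \<Sum>j\<in>A. d i j)"
  proof -
    have g1: "(\<Sum>j\<in>A. G j) = (\<Sum>j\<in>A. \<Sum>i\<in>A. d i j * c i j)"
      by (simp add: G_def)
    have g2: "(\<Sum>j\<in>A. \<Sum>i\<in>A. d i j * c i j) = (\<Sum>i\<in>A. \<Sum>j\<in>A. d i j * c i j)"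
      by (rule sum.swap)
    have g3: "(\<Sum>i\<in>A. \<Sum>j\<in>A. d i j * c i j) = (\<Sum>i\<in>A. \<Sum>j\<in>A. d j i * c i j)"
      by (simp add: dsym)
    have g4: "(\<Sum>j\<in>A. \<Sum>i\<in>A. d i j * c i j) + (\<Sum>j\<in>A. \<Sum>i\<in>A. d i j * c j i)
       = (\<Sum>j\<in>A. \<Sum>i\<in>A. 2 * d i j)"
      unfolding sum.distrib[symmetric] by (intro sum.cong refl) (metis csym distrib_left mult.commute)
    have g5: "(\<Sum>j\<in>A. \<Sum>i\<in>A. 2 * d i j) = 2 * (\<Sum>j\<in>A. \<Sum>i\<in>A. d i j)"
      by (simp add: sum_distrib_left)
    have g6: "(\<Sum>j\<in>A. \<Sum>i\<in>A. d i j) = (\<Sum>i\<in>A. \<Sum>j\<in>A. d i j)"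
      by (rule sum.swap)
    show ?thesis using g1 g2 g3 g4 g5 g6 by simp
  qed
  have Gmono: "G j \<le> G k" if "j \<in> A" "k \<in> A" "p j \<le> p k" for j k
    unfolding G_def
  proof (rule sum_mono)
    fix i assume i: "i \<in> A"
    show "d i j * c i j \<le> d i k * c i k"
    proof (cases "p j = p k")
      case True
      then have "f j = f k" using mo that by (metis order_refl antisym)
      then show ?thesis using True by (simp add: d_def c_def)
    next
      case False
      then have lt: "p j < p k" using that by simp
      show ?thesis
      proof (cases "p i \<le> p j")
        case True
        then have "f i \<le> f j" "f j \<le> f k" using mo that i by blast+
        then have "d i j \<le> d i k" unfolding d_def
          by (simp add: power2_commute[of "f i"] power_mono)
        moreover have "c i j \<le> c i k" using True lt by (auto simp: c_def)
        ultimately show ?thesis using d0 c0 by (simp add: mult_mono)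
      next
        case False
        then have "c i j = 0" by (auto simp: c_def)
        then show ?thesis using d0 c0 by simp
      qed
    qed
  qed
  have cheb: "(\<Sum>j\<in>A. G j) * (\<Sum>j\<in>A. (p j)^2) \<le> real (card A) * (\<Sum>j\<in>A. G j * (p j)^2)"
  proof (rule chebyshev[OF fin], intro ballI)
    fix j k assume jk: "j \<in> A" "k \<in> A"
    show "0 \<le> (G j - G k) * ((p j)^2 - (p k)^2)"
    proof (cases "p j \<le> p k")
      case True
      then have "G j \<le> G k" "(p j)^2 \<le> (p k)^2" using Gmono jk p0 by (auto intro: power_mono)
      then show ?thesis by (simp add: mult_nonpos_nonpos)
    next
      case False
      then have "G k \<le> G j" "(p k)^2 \<le> (p j)^2" using Gmono jk p0 by (auto intro: power_mono)
      then show ?thesis by simp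
    qed
  qed
  have sum1: "(\<Sum>i\<in>A. \<Sum>j\<in>A. d i j * M i j) \<le> (\<Sum>i\<in>A. \<Sum>j\<in>A. (f i * p i - f j * p j)^2)"
    using step1 by (intro sum_mono) auto
  have npos: "0 < real (card A)" using fin ne by (simp add: card_gt_0_iff)
  have "uvar A f * uexp A (\<lambda>i. (p i)^2)
      = (\<Sum>j\<in>A. G j) * (\<Sum>j\<in>A. (p j)^2) / (2 * (real (card A))^2 * real (card A))"
    unfolding uvar_double[OF fin ne] uexp_def step3 d_def by simp
  also have "\<dots> \<le> real (card A) * (\<Sum>j\<in>A. G j * (p j)^2) / (2 * (real (card A))^2 * real (card A))"
    by (rule divide_right_mono[OF cheb]) (use npos in simp)
  also have "\<dots> = (\<Sum>i\<in>A. \<Sum>j\<in>A. d i j * M i j) / (2 * (real (card A))^2)"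
    using npos by (simp add: step2 power2_eq_square)
  also have "\<dots> \<le> uvar A (\<lambda>i. f i * p i)"
    unfolding uvar_double[OF fin ne] using sum1 npos by (simp add: divide_right_mono)
  finally show ?thesis .
qed

lemma ucov_comm: "ucov A f g = ucov A g f"
  by (simp add: ucov_def mult.commute)

lemma uvar_diff: "uvar A (\<lambda>i. f i - g i) = uvar A f + uvar A g - 2 * ucov A f g"
proof -
  have "(\<lambda>i. (f i - g i - uexp A (\<lambda>i. f i - g i))^2) =
     (\<lambda>i. ((f i - uexp A f)^2 + (g i - uexp A g)^2) - 2 * ((f i - uexp A f) * (g i - uexp A g)))"
    by (rule ext) (simp add: uexp_diff power2_eq_square algebra_simps)
  then show ?thesis
    by (simp add: uvar_def ucov_def uexp_add uexp_diff uexp_cmult)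
qed

lemma frac_mono_aux:
  fixes x y c :: real
  assumes "0 < x" "x \<le> y" "0 < c"
  shows "x / (x + c) \<le> y / (y + c)"
proof -
  have "x * (y + c) \<le> y * (x + c)" using assms by (simp add: algebra_simps mult_right_mono)
  then show ?thesis using assms by (simp add: divide_simps)
qed

lemma alpha_mono:
  assumes fin: "finite A" and pos: "\<forall>i\<in>A. p i > 0"
    and i: "i \<in> A" and j: "j \<in> A" and le: "p i \<le> p j"
  shows "alpha A p i \<le> alpha A p j"
proof (cases "i = j")
  case True then show ?thesis by simp
next
  case False
  have ji: "j \<in> A - {i}" and ij: "i \<in> A - {j}" using i j False by auto
  have eq: "A - {i} - {j} = A - {j} - {i}" by auto
  have ai: "alpha A p i = p i / (p i + p j) + (\<Sum>k\<in>A - {i} - {j}. p i / (p i + p k))"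
    unfolding alpha_def using fin ji by (simp add: sum.remove)
  have aj: "alpha A p j = p j / (p j + p i) + (\<Sum>k\<in>A - {i} - {j}. p j / (p j + p k))"
    unfolding alpha_def eq using fin ij by (simp add: sum.remove)
  have t1: "p i / (p i + p j) \<le> p j / (p j + p i)"
  proof -
    have "p i / (p i + p j) \<le> p j / (p i + p j)"
      using pos i j le by (intro divide_right_mono) auto
    then show ?thesis by (simp add: add.commute)
  qed
  have t2: "(\<Sum>k\<in>A - {i} - {j}. p i / (p i + p k)) \<le> (\<Sum>k\<in>A - {i} - {j}. p j / (p j + p k))"
    using pos i le by (intro sum_mono frac_mono_aux) auto
  show ?thesis using ai aj t1 t2 by simp
qed

theorem theorem4p11:
  fixes A :: "'a set" and p r :: "'a \<Rightarrow> real"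
  assumes "finite A" and "card A \<ge> 2"
    and "\<forall>i\<in>A. p i > 0" and "(\<Sum>i\<in>A. p i) = 1"
    and "\<exists>h :: real \<Rightarrow> real. mono h \<and> (\<forall>i\<in>A. beta A r i = h (p i))"
  shows "uvar A (\<lambda>i. wgt A p r i * p i) - uvar A (wgt A p r) * uexp A (\<lambda>i. (p i)^2)
         \<ge> 2 * (ucov A (alpha A p) (beta A r) * uexp A (\<lambda>i. (p i)^2)
                - ucov A (\<lambda>i. alpha A p i * p i) (\<lambda>i. beta A r i * p i))"
proof -
  obtain h :: "real \<Rightarrow> real" where hm: "mono h" and hb: "\<forall>i\<in>A. beta A r i = h (p i)"
    using assms(5) by blast
  have fin: "finite A" by fact
  have ne: "A \<noteq> {}" using assms(2) by auto
  have p0: "\<forall>i\<in>A. 0 \<le> p i" using assms(3) by (simp add: less_imp_le)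
  have a0: "\<forall>i\<in>A. 0 \<le> alpha A p i"
    unfolding alpha_def using assms(3) by (auto intro!: sum_nonneg simp: less_imp_le)
  have b0: "\<forall>i\<in>A. 0 \<le> beta A r i"
    unfolding beta_def by (auto intro!: sum_nonneg simp: less_imp_le add_pos_pos)
  have am: "\<forall>i\<in>A. \<forall>j\<in>A. p i \<le> p j \<longrightarrow> alpha A p i \<le> alpha A p j"
    using alpha_mono[OF fin assms(3)] by blast
  have bm: "\<forall>i\<in>A. \<forall>j\<in>A. p i \<le> p j \<longrightarrow> beta A r i \<le> beta A r j"
    using hb hm by (auto dest: monoD)
  have Da: "uvar A (alpha A p) * uexp A (\<lambda>i. (p i)^2) \<le> uvar A (\<lambda>i. alpha A p i * p i)"
    by (rule D_nonneg[OF fin ne a0 p0 am])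
  have Db: "uvar A (beta A r) * uexp A (\<lambda>i. (p i)^2) \<le> uvar A (\<lambda>i. beta A r i * p i)"
    by (rule D_nonneg[OF fin ne b0 p0 bm])
  have w1: "(\<lambda>i. wgt A p r i * p i) = (\<lambda>i. beta A r i * p i - alpha A p i * p i)"
    by (rule ext) (simp add: wgt_def algebra_simps)
  have w2: "wgt A p r = (\<lambda>i. beta A r i - alpha A p i)"
    by (rule ext) (simp add: wgt_def)
  have v1: "uvar A (\<lambda>i. wgt A p r i * p i) = uvar A (\<lambda>i. beta A r i * p i)
      + uvar A (\<lambda>i. alpha A p i * p i) - 2 * ucov A (\<lambda>i. beta A r i * p i) (\<lambda>i. alpha A p i * p i)"
    unfolding w1 by (rule uvar_diff)
  have v2: "uvar A (wgt A p r) = uvar A (beta A r) + uvar A (alpha A p) - 2 * ucov A (beta A r) (alpha A p)"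
    unfolding w2 by (rule uvar_diff)
  show ?thesis
    unfolding v1 v2
    using Da Db ucov_comm[of A "alpha A p" "beta A r"]
      ucov_comm[of A "\<lambda>i. alpha A p i * p i" "\<lambda>i. beta A r i * p i"]
    by (simp add: algebra_simps)
qed

end
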